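(* Let $G$ be a group and $\mathcal{S}$ a 2-complex with vertices in $G$ such that $\mathcal{C}=Sc[\mathcal{S},G]$ is a commutative triplet structure. For every vertex $v\in G\times\mathcal{T}$, the map $E$ restricts to a bijection from the neighbor set $\Gamma_{G_{zig}}(v)$ onto the neighbor set $\Gamma_{G_{walk}(\mathcal{C})}(E(v))$.
   Context: For a 2-complex $X$, $X(1)$ is the set of 2-sets in triangles; $G_{walk}(X)$ is the graph on $X(1)$ with distinct edges adjacent iff they lie in a common triangle. For $\sigma\subseteq G$, $\sigma\cdot g=\{sg:s\in\sigma\}$; $Sc[\mathcal{S},G]=\{\sigma\cdot g\}$. $\mathcal{T}=\mathcal{S}(1)$, $\mathcal{T}_o$ = ordered pairs $(t_1,t_2)$ with $\{t_1,t_2\}\in\mathcal{T}$. Commutative triplet structure: (0) $\{s,s^{-1}\}\notin\mathcal{T}$ for every vertex $s$; (A) every edge of $\mathcal{T}$ lies in exactly $\tilde d$ triangles of $\mathcal{S}$; (B) $ab=ba$ for $\{a,b\}\in\mathcal{T}$; (C) $\{a,b\}\in\mathcal{T}\iff\{a^{-1},b^{-1}\}\in\mathcal{T}$; (D) for $t\ne t'\in\mathcal{T}_o$, $t_1t_2^{-1}=t'_1(t'_2)^{-1}$ implies $t'_2=t_1^{-1}$, $t'_1=t_2^{-1}$; (E) the 1-skeleton of $\mathcal{S}$ is connected. For $\tau=\{a,b\}$: $E(g,\tau)=\{ag,bg\}$, $\hat\tau g=abg$, $\tau^{-1}=\{a^{-1},b^{-1}\}$. $L=G_{walk}(\mathcal{S})$.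 On $G\times\mathcal{T}$, red edges join $(g,\tau)$ and $(g,\tau')$ when $\tau\sim\tau'$ in $L$; the blue edge joins $(g,\tau)$ and $(\hat\tau g,\tau^{-1})$. $G_{zig}$ is the graph on $G\times\mathcal{T}$ induced by the operator $\tfrac12P_R+\tfrac12P_RP_B$ ($P_R,P_B$ the normalized red/blue adjacency matrices): the neighbors of $v$ are its red neighbors and the red neighbors of its blue neighbor. *)

theory Defs
  imports Main
begin

text \<open>The group G is a (not necessarily commutative) type of class group_add;
  the group product a b is written a + b and the inverse a^{-1} as - a.\<close>

definition two_complex :: "'a set set \<Rightarrow> bool" where
  "two_complex X \<longleftrightarrow> (\<forall>\<sigma>\<in>X. \<sigma> \<noteq> {} \<and> finite \<sigma> \<and> card \<sigma> \<le> 3 \<and>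
      (\<forall>\<tau>. \<tau> \<noteq> {} \<longrightarrow> \<tau> \<subseteq> \<sigma> \<longrightarrow> \<tau> \<in> X))"

definition triangles :: "'a set set \<Rightarrow> 'a set set" where
  "triangles X = {\<sigma> \<in> X. card \<sigma> = 3}"

definition edges1 :: "'a set set \<Rightarrow> 'a set set" where
  "edges1 X = {e. card e = 2 \<and> (\<exists>t\<in>triangles X. e \<subseteq> t)}"

definition walk_adj :: "'a set set \<Rightarrow> 'a set \<Rightarrow> 'a set \<Rightarrow> bool" where
  "walk_adj X e e' \<longleftrightarrow> e \<in> edges1 X \<and> e' \<in> edges1 X \<and> e \<noteq> e' \<and>
      (\<exists>t\<in>triangles X. e \<union> e' \<subseteq> t)"

definition walk_nbrs :: "'a set set \<Rightarrow> 'a set \<Rightarrow> 'a set set" where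
  "walk_nbrs X e = {e'. walk_adj X e e'}"

definition rtrans :: "'a::group_add set \<Rightarrow> 'a \<Rightarrow> 'a set" where
  "rtrans \<sigma> g = (\<lambda>s. s + g) ` \<sigma>"

definition Sc :: "'a::group_add set set \<Rightarrow> 'a set set" where
  "Sc S = {rtrans \<sigma> g | \<sigma> g. \<sigma> \<in> S}"

definition Tord :: "'a set set \<Rightarrow> ('a \<times> 'a) set" where
  "Tord S = {(a, b). {a, b} \<in> edges1 S}"

definition skeleton_connected :: "'a set set \<Rightarrow> bool" where
  "skeleton_connected S \<longleftrightarrow>
     (\<forall>x y. {x} \<in> S \<longrightarrow> {y} \<in> S \<longrightarrow> (x, y) \<in> {(u, w). {u, w} \<in> S \<and> u \<noteq> w}\<^sup>*)"

definition comm_triplet :: "'a::group_add set set \<Rightarrow> nat \<Rightarrow> bool" where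
  "comm_triplet S d \<longleftrightarrow>
     (\<forall>s. {s} \<in> S \<longrightarrow> {s, - s} \<notin> edges1 S) \<and>
     (\<forall>e\<in>edges1 S. finite {t\<in>triangles S. e \<subseteq> t} \<and> card {t\<in>triangles S. e \<subseteq> t} = d) \<and>
     (\<forall>a b. {a, b} \<in> edges1 S \<longrightarrow> a + b = b + a) \<and>
     (\<forall>a b. {a, b} \<in> edges1 S \<longleftrightarrow> {- a, - b} \<in> edges1 S) \<and>
     (\<forall>t\<in>Tord S. \<forall>t'\<in>Tord S. t \<noteq> t' \<longrightarrow> fst t + - snd t = fst t' + - snd t' \<longrightarrow>
         snd t' = - fst t \<and> fst t' = - snd t) \<and>
     skeleton_connected S"

definition Emap :: "'a::group_add \<times> 'a set \<Rightarrow> 'a set" where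
  "Emap v = rtrans (snd v) (fst v)"

definition red :: "'a set set \<Rightarrow> 'a \<times> 'a set \<Rightarrow> 'a \<times> 'a set \<Rightarrow> bool" where
  "red S v w \<longleftrightarrow> fst w = fst v \<and> walk_adj S (snd v) (snd w)"

definition blue :: "'a::group_add set set \<Rightarrow> 'a \<times> 'a set \<Rightarrow> 'a \<times> 'a set \<Rightarrow> bool" where
  "blue S v w \<longleftrightarrow> snd v \<in> edges1 S \<and>
     (\<exists>a b. snd v = {a, b} \<and> a \<noteq> b \<and> w = (a + b + fst v, {- a, - b}))"

definition zig_nbrs :: "'a::group_add set set \<Rightarrow> 'a \<times> 'a set \<Rightarrow> ('a \<times> 'a set) set" where
  "zig_nbrs S v = {w. red S v w} \<union> {w. \<exists>u. blue S v u \<and> red S u w}"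

end

theory Submission
  imports Defs
begin

lemma rtrans_card: "card (rtrans A (g::'a::group_add)) = card A"
  unfolding rtrans_def by (rule card_image) (simp add: inj_on_def)

lemma rtrans_comp: "rtrans (rtrans A g) h = rtrans A ((g::'a::group_add) + h)"
  unfolding rtrans_def image_image by (simp add: add.assoc)

lemma rtrans_zero: "rtrans A (0::'a::group_add) = A"
  unfolding rtrans_def by simp

lemma rtrans_back: "rtrans (rtrans A g) (- g) = A" "rtrans (rtrans A (- g)) g = (A::'a::group_add set)"
  by (simp_all add: rtrans_comp rtrans_zero)

lemma rtrans_eq_iff: "rtrans A g = rtrans B g \<longleftrightarrow> A = (B::'a::group_add set)"
  by (metis rtrans_back(1))

lemma rtrans_subset_iff: "rtrans A g \<subseteq> rtrans B g \<longleftrightarrow> A \<subseteq> (B::'a::group_add set)"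
  unfolding rtrans_def by (rule inj_image_subset_iff) (simp add: inj_on_def)

lemma rtrans_pair: "rtrans {x, y} g = {x + g, y + (g::'a::group_add)}"
  unfolding rtrans_def by simp

lemma rtrans_Un: "rtrans (A \<union> B) g = rtrans A g \<union> rtrans B (g::'a::group_add)"
  unfolding rtrans_def by auto

lemma tri_Sc: "\<sigma> \<in> triangles S \<Longrightarrow> rtrans \<sigma> h \<in> triangles (Sc S)"
  unfolding triangles_def Sc_def by (auto simp: rtrans_card)

lemma tri_Sc_D: "T \<in> triangles (Sc S) \<Longrightarrow> \<exists>\<sigma> h. \<sigma> \<in> triangles S \<and> T = rtrans \<sigma> (h::'a::group_add)"
  unfolding triangles_def Sc_def by (auto simp: rtrans_card)

lemma walk_Sc:
  assumes "walk_adj S A B"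
  shows "walk_adj (Sc S) (rtrans A h) (rtrans B (h::'a::group_add))"
proof -
  from assms obtain t where t: "t \<in> triangles S" "A \<union> B \<subseteq> t" "A \<in> edges1 S" "B \<in> edges1 S" "A \<noteq> B"
    unfolding walk_adj_def by blast
  have T: "rtrans t h \<in> triangles (Sc S)" using t(1) by (rule tri_Sc)
  have sub: "rtrans A h \<union> rtrans B h \<subseteq> rtrans t h"
    using t(2) by (simp add: rtrans_Un[symmetric] rtrans_subset_iff)
  have "rtrans A h \<in> edges1 (Sc S)" "rtrans B h \<in> edges1 (Sc S)"
    using t(3,4) T sub unfolding edges1_def by (auto simp: rtrans_card)
  then show ?thesis unfolding walk_adj_def using T sub t(5) by (auto simp: rtrans_eq_iff)
qed

lemma walk_Sc_back:
  assumes "\<sigma> \<in> triangles S" "rtrans A h \<union> e \<subseteq> rtrans \<sigma> h" "A \<in> edges1 S"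
    "card e = 2" "e \<noteq> rtrans A (h::'a::group_add)"
  shows "walk_adj S A (rtrans e (-h)) \<and> e = rtrans (rtrans e (-h)) h"
proof -
  have e2: "e = rtrans (rtrans e (-h)) h" by (simp add: rtrans_back)
  have "rtrans e (-h) \<subseteq> \<sigma>" using assms(2) e2 by (metis le_sup_iff rtrans_subset_iff)
  moreover have "A \<subseteq> \<sigma>" using assms(2) by (simp add: rtrans_subset_iff)
  moreover have "card (rtrans e (-h)) = 2" using assms(4) by (simp add: rtrans_card)
  moreover have "rtrans e (-h) \<noteq> A" using assms(5) e2 by metis
  ultimately show ?thesis using assms(1,3) e2 unfolding walk_adj_def edges1_def by auto
qed

lemma two_in_three:
  assumes "finite t" "card t = 3" "A \<subseteq> t" "B \<subseteq> t" "card A = 2" "card B = 2"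
  shows "A \<inter> B \<noteq> {}"
proof
  assume "A \<inter> B = {}"
  moreover have "finite A" "finite B" using assms finite_subset by auto
  ultimately have "card (A \<union> B) = 4" using assms by (simp add: card_Un_disjoint)
  moreover have "card (A \<union> B) \<le> 3" using assms by (metis card_mono le_sup_iff)
  ultimately show False by simp
qed


lemma addneg0: "x + - y = 0 \<Longrightarrow> x = (y::'a::group_add)"
  by (metis diff_conv_add_uminus eq_iff_diff_eq_0)

lemma key_shift:
  assumes "comm_triplet S d" "{p, q} \<in> edges1 S" "{p + k, q + k} \<in> edges1 S"
  shows "k = 0 \<or> (q + k = - p \<and> p + k = - (q::'a::group_add))"
proof (cases "k = 0")
  case False
  have D: "\<forall>t\<in>Tord S. \<forall>t'\<in>Tord S. t \<noteq> t' \<longrightarrow> fst t + - snd t = fst t' + - snd t' \<longrightarrow>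
         snd t' = - fst t \<and> fst t' = - snd t" using assms(1) unfolding comm_triplet_def by blast
  have T1: "(p, q) \<in> Tord S" and T2: "(p + k, q + k) \<in> Tord S"
    using assms(2,3) unfolding Tord_def by auto
  have ne: "(p, q) \<noteq> (p + k, q + k)"
  proof
    assume "(p, q) = (p + k, q + k)"
    then have "p + k = p + 0" by simp
    then have "k = 0" by (simp only: add_left_cancel)
    then show False using False by simp
  qed
  have eq: "fst (p, q) + - snd (p, q) = fst (p + k, q + k) + - snd (p + k, q + k)"
    by (simp only: fst_conv snd_conv minus_add add.assoc add_minus_cancel)
  have "snd (p + k, q + k) = - fst (p, q) \<and> fst (p + k, q + k) = - snd (p, q)"
    using D T1 T2 ne eq by blast
  then show ?thesis by simp
qed simp

theorem mainTheorem9: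
  fixes S :: "'a::group_add set set" and d :: nat and v :: "'a \<times> 'a set"
  assumes "two_complex S"
    and "comm_triplet S d"
    and "v \<in> UNIV \<times> edges1 S"
  shows "bij_betw Emap (zig_nbrs S v) (walk_nbrs (Sc S) (Emap v))"
proof -
  obtain g \<tau> where v: "v = (g, \<tau>)" by (cases v)
  have \<tau>E: "\<tau> \<in> edges1 S" using assms(3) v by auto
  then obtain a b where ab: "\<tau> = {a, b}" "a \<noteq> b" unfolding edges1_def by (auto simp: card_2_iff)
  have C0: "\<forall>s. {s} \<in> S \<longrightarrow> {s, - s} \<notin> edges1 S"
    and CB: "\<forall>a b. {a, b} \<in> edges1 S \<longrightarrow> a + b = b + a"
    and CC: "\<forall>a b. {a, b} \<in> edges1 S \<longleftrightarrow> {- a, - b} \<in> edges1 S"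
    using assms(2) unfolding comm_triplet_def by blast+
  have comm: "a + b = b + a" using CB \<tau>E ab by blast
  have inv: "{- a, - b} \<in> edges1 S" using CC \<tau>E ab by blast
  have k0: "a + b \<noteq> 0"
  proof
    assume h: "a + b = 0"
    have "b = - a" using minus_add_cancel[of a b] h by simp
    moreover have "{a} \<in> S"
    proof -
      obtain t where "t \<in> triangles S" "\<tau> \<subseteq> t" using \<tau>E unfolding edges1_def by blast
      then show ?thesis using assms(1) ab unfolding two_complex_def triangles_def by blast
    qed
    ultimately show False using C0 \<tau>E ab by blast
  qed
  have c1: "- a + (a + b + g) = b + g" by (simp add: add.assoc[symmetric])
  have c2: "- b + (a + b + g) = a + g" using comm by (simp add: add.assoc[symmetric])
  have Ev: "Emap v = rtrans \<tau> g" using v by (simp add: Emap_def)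
  have Ev2: "Emap v = rtrans {- a, - b} (a + b + g)"
    using Ev ab c1 c2 by (simp add: rtrans_pair insert_commute)
  have blue_iff: "blue S v u \<longleftrightarrow> u = (a + b + g, {- a, - b})" for u
  proof
    assume "blue S v u"
    then obtain a' b' where ab': "{a, b} = {a', b'}" "u = (a' + b' + g, {- a', - b'})"
      unfolding blue_def using v ab by auto
    from ab'(1) have "(a = a' \<and> b = b') \<or> (a = b' \<and> b = a')" by (simp add: doubleton_eq_iff)
    then show "u = (a + b + g, {- a, - b})"
    proof
      assume "a = a' \<and> b = b'" then show ?thesis using ab'(2) by simp
    next
      assume "a = b' \<and> b = a'"
      then have "u = (b + a + g, {- b, - a})" using ab'(2) by simp
      then show ?thesis by (simp only: comm insert_commute)
    qed
  next
    assume "u = (a + b + g, {- a, - b})"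
    then show "blue S v u" unfolding blue_def using v ab \<tau>E by auto
  qed
  define R where "R = {(g, t') | t'. walk_adj S \<tau> t'}"
  define B where "B = {(a + b + g, t') | t'. walk_adj S {- a, - b} t'}"
  have Z: "zig_nbrs S v = R \<union> B"
    unfolding zig_nbrs_def R_def B_def red_def blue_iff using v by auto
  have img1: "Emap ` (R \<union> B) \<subseteq> walk_nbrs (Sc S) (Emap v)"
  proof
    fix e assume "e \<in> Emap ` (R \<union> B)"
    then obtain w where w: "w \<in> R \<union> B" "e = Emap w" by blast
    from w(1) have "walk_adj (Sc S) (Emap v) e"
    proof
      assume "w \<in> R"
      then obtain t' where "w = (g, t')" "walk_adj S \<tau> t'" unfolding R_def by blast
      then show ?thesis using walk_Sc[of S \<tau> t' g] w(2) Ev by (simp add: Emap_def)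
    next
      assume "w \<in> B"
      then obtain t' where "w = (a + b + g, t')" "walk_adj S {- a, - b} t'" unfolding B_def by blast
      then show ?thesis using walk_Sc[of S "{- a, - b}" t' "a + b + g"] w(2) Ev2 by (simp add: Emap_def)
    qed
    then show "e \<in> walk_nbrs (Sc S) (Emap v)" unfolding walk_nbrs_def by simp
  qed
  have img2: "walk_nbrs (Sc S) (Emap v) \<subseteq> Emap ` (R \<union> B)"
  proof
    fix e assume "e \<in> walk_nbrs (Sc S) (Emap v)"
    then have wa: "walk_adj (Sc S) (Emap v) e" unfolding walk_nbrs_def by simp
    then obtain T where T: "T \<in> triangles (Sc S)" "Emap v \<union> e \<subseteq> T" "card e = 2" "e \<noteq> Emap v"
      unfolding walk_adj_def edges1_def by blast
    obtain \<sigma> h where sh: "\<sigma> \<in> triangles S" "T = rtrans \<sigma> h" using tri_Sc_D[OF T(1)] by blast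
    define m where "m = g + - h"
    have Em: "Emap v = rtrans (rtrans \<tau> m) h" using Ev by (simp add: rtrans_comp m_def add.assoc)
    have sub: "rtrans \<tau> m \<subseteq> \<sigma>" using T(2) sh Em by (metis le_sup_iff rtrans_subset_iff)
    have "a + m \<noteq> b + m" using ab by simp
    then have "card (rtrans \<tau> m) = 2" using ab by (simp add: rtrans_pair)
    then have tm: "rtrans \<tau> m \<in> edges1 S" using sub sh(1) unfolding edges1_def by blast
    have W: "walk_adj S (rtrans \<tau> m) (rtrans e (-h)) \<and> e = rtrans (rtrans e (-h)) h"
      using walk_Sc_back[OF sh(1) _ tm T(3)] T(2,4) sh(2) Em by simp
    have "m = 0 \<or> (b + m = - a \<and> a + m = - b)"
      using key_shift[OF assms(2) \<tau>E[unfolded ab]] tm ab by (simp add: rtrans_pair)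
    then show "e \<in> Emap ` (R \<union> B)"
    proof
      assume "m = 0"
      then have "g = h" unfolding m_def by (rule addneg0)
      moreover have "walk_adj S \<tau> (rtrans e (-h))" using W \<open>m = 0\<close> by (simp add: rtrans_zero)
      ultimately have "(g, rtrans e (-h)) \<in> R" "Emap (g, rtrans e (-h)) = e"
        by (auto simp: R_def Emap_def rtrans_back)
      then show ?thesis by force
    next
      assume mm: "b + m = - a \<and> a + m = - b"
      have "a + (b + m) = 0" using mm by simp
      then have "a + b + g + - h = 0" unfolding m_def by (simp only: add.assoc)
      then have "a + b + g = h" by (rule addneg0)
      moreover have "rtrans \<tau> m = {- a, - b}" using mm ab by (auto simp: rtrans_pair)
      moreover have "walk_adj S (rtrans \<tau> m) (rtrans e (-h))" using W by blast
      ultimately have "(a + b + g, rtrans e (-h)) \<in> B" "Emap (a + b + g, rtrans e (-h)) = e"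
        by (auto simp: B_def Emap_def rtrans_back)
      then show ?thesis by force
    qed
  qed
  have cross: False if w1: "walk_adj S \<tau> t'" and w2: "walk_adj S {- a, - b} t''"
      and eq: "rtrans t' g = rtrans t'' (a + b + g)" for t' t''
  proof -
    have "t' = rtrans t'' (a + b + g + - g)" using eq by (metis rtrans_back(1) rtrans_comp)
    then have t'eq: "t' = rtrans t'' (a + b)" by (simp only: add.assoc add.right_inverse add_0_right)
    have "t'' \<in> edges1 S" using w2 unfolding walk_adj_def by blast
    then obtain x y where xy: "t'' = {x, y}" "x \<noteq> y" unfolding edges1_def by (auto simp: card_2_iff)
    have t'E: "t' \<in> edges1 S" using w1 unfolding walk_adj_def by blast
    then have "{x + (a + b), y + (a + b)} \<in> edges1 S" using t'eq xy by (simp add: rtrans_pair)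
    then have yk: "y + (a + b) = - x \<and> x + (a + b) = - y"
      using key_shift[OF assms(2), of x y "a + b"] \<open>t'' \<in> edges1 S\<close> xy k0 by blast
    have t'2: "t' = {x + (a + b), y + (a + b)}" using t'eq xy by (simp add: rtrans_pair)
    obtain t where t: "t \<in> triangles S" "\<tau> \<union> t' \<subseteq> t" "t' \<noteq> \<tau>" using w1 unfolding walk_adj_def by blast
    have "t' \<inter> \<tau> \<noteq> {}"
      apply (rule two_in_three[of t])
      using t \<tau>E t'E unfolding triangles_def edges1_def by (auto intro: card_ge_0_finite)
    then have "x + (a + b) = a \<or> x + (a + b) = b \<or> y + (a + b) = a \<or> y + (a + b) = b"
      using t'2 ab by auto
    moreover have "t' = \<tau>"
    proof -
      have X1: "x = - a \<Longrightarrow> x + (a + b) = b" by (simp add: add.assoc[symmetric])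
      have X2: "x = - b \<Longrightarrow> x + (a + b) = a" using comm by (simp add: add.assoc[symmetric])
      have Y1: "y = - a \<Longrightarrow> y + (a + b) = b" by (simp add: add.assoc[symmetric])
      have Y2: "y = - b \<Longrightarrow> y + (a + b) = a" using comm by (simp add: add.assoc[symmetric])
      have "x + (a + b) = a \<or> x + (a + b) = b \<or> y + (a + b) = a \<or> y + (a + b) = b"
        using calculation .
      then show ?thesis
      proof (elim disjE)
        assume h: "x + (a + b) = a"
        then have "y = - a" using yk by (metis minus_minus)
        then have "y + (a + b) = b" by (rule Y1)
        then show ?thesis using h by (simp add: t'2 ab insert_commute)
      next
        assume h: "x + (a + b) = b"
        then have "y = - b" using yk by (metis minus_minus)
        then have "y + (a + b) = a" by (rule Y2)
        then show ?thesis using h by (simp add: t'2 ab insert_commute)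
      next
        assume h: "y + (a + b) = a"
        then have "x = - a" using yk by (metis minus_minus)
        then have "x + (a + b) = b" by (rule X1)
        then show ?thesis using h by (simp add: t'2 ab insert_commute)
      next
        assume h: "y + (a + b) = b"
        then have "x = - b" using yk by (metis minus_minus)
        then have "x + (a + b) = a" by (rule X2)
        then show ?thesis using h by (simp add: t'2 ab insert_commute)
      qed
    qed
    ultimately show False using t(3) by blast
  qed
  have inj: "inj_on Emap (R \<union> B)"
  proof (rule inj_onI)
    fix w1 w2
    assume A: "w1 \<in> R \<union> B" "w2 \<in> R \<union> B" "Emap w1 = Emap w2"
    obtain t1 where T1: "(w1 = (g, t1) \<and> walk_adj S \<tau> t1) \<or> (w1 = (a + b + g, t1) \<and> walk_adj S {- a, - b} t1)"
      using A(1) unfolding R_def B_def by blast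
    obtain t2 where T2: "(w2 = (g, t2) \<and> walk_adj S \<tau> t2) \<or> (w2 = (a + b + g, t2) \<and> walk_adj S {- a, - b} t2)"
      using A(2) unfolding R_def B_def by blast
    show "w1 = w2"
      using T1 T2
    proof (elim disjE conjE)
      assume "w1 = (g, t1)" "w2 = (g, t2)"
      then show ?thesis using A(3) by (simp add: Emap_def rtrans_eq_iff)
    next
      assume "w1 = (a + b + g, t1)" "w2 = (a + b + g, t2)"
      then show ?thesis using A(3) by (simp add: Emap_def rtrans_eq_iff)
    next
      assume "w1 = (g, t1)" "walk_adj S \<tau> t1" "w2 = (a + b + g, t2)" "walk_adj S {- a, - b} t2"
      then show ?thesis using A(3) cross[of t1 t2] by (simp add: Emap_def)
    next
      assume "w2 = (g, t2)" "walk_adj S \<tau> t2" "w1 = (a + b + g, t1)" "walk_adj S {- a, - b} t1"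
      then show ?thesis using A(3) cross[of t2 t1] by (simp add: Emap_def)
    qed
  qed
  show ?thesis unfolding Z
    by (rule bij_betw_imageI[OF inj]) (use img1 img2 in blast)
qed

end
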